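(* Let $r\ge1$, let $\alpha_1,\dots,\alpha_r\in(0,1)$, and let $h_1,h_{21},\dots,h_{2r}>0$. Suppose the elements of the set $$L(\underline\alpha,\underline h)=\{h_1\log p:p\in\mathbb{P}\}\cup\bigcup_{j=1}^r\{h_{2j}\log(m+\alpha_j):m\in\mathbb{N}_0\}\cup\{\pi\}$$ are linearly independent over $\mathbb{Q}$. Then the transformation $\Phi_{\underline\alpha,\underline h}(\underline\omega)=a_{\underline\alpha,\underline h}\,\underline\omega$ of $\underline\Omega$ is ergodic with respect to the Haar measure $m_H$.
   Context: Let $\gamma$ be the unit circle in $\mathbb{C}$. Define the tori $\Omega_1=\prod_{p\in\mathbb{P}}\gamma_p$ and $\Omega_2=\prod_{m\in\mathbb{N}_0}\gamma_m$, where every factor equals $\gamma$; these carry the product topology and pointwise multiplication. Put $\underline\Omega=\Omega_1\times\Omega_{21}\times\cdots\times\Omega_{2r}$ with each $\Omega_{2j}=\Omega_2$. This is a compact abelian group, and $m_H$ denotes its probability Haar measure on the Borel sets. Define the element $$a_{\underline\alpha,\underline h}=\big((p^{-ih_1}:p\in\mathbb{P}),((m+\alpha_1)^{-ih_{21}}:m\in\mathbb{N}_0),\dots,((m+\alpha_r)^{-ih_{2r}}:m\in\mathbb{N}_0)\big)\in\underline\Omega.$$ A Borel set $A$ is invariant under $\Phi$ if $A$ and $\Phi(A)$ differ by an $m_H$-null set. The transformation $\Phi$ is ergodic if every invariant set has $m_H$-measure $0$ or $1$. *)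

theory Defs
  imports "HOL-Probability.Probability"
begin

text \<open>Coordinates of the torus: Inl p for primes p (the factor Omega_1),
  Inr (j, m) for j in 1..r, m in N_0 (the factor Omega_2j).\<close>
type_synonym idx = "nat + (nat \<times> nat)"

definition torus_index :: "nat \<Rightarrow> idx set" where
  "torus_index r = Inl ` {p. prime p} \<union> Inr ` ({1..r} \<times> UNIV)"

text \<open>The torus as a subset of the product space idx => complex (product topology);
  coordinates outside the index set are fixed to 1 so that the set is closed under
  pointwise multiplication.\<close>
definition torus :: "nat \<Rightarrow> (idx \<Rightarrow> complex) set" where
  "torus r = {\<omega>. (\<forall>i\<in>torus_index r. cmod (\<omega> i) = 1) \<and> (\<forall>i. i \<notin> torus_index r \<longrightarrow> \<omega> i = 1)}"

definition haar_prob_measure :: "nat \<Rightarrow> (idx \<Rightarrow> complex) measure \<Rightarrow> bool" where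
  "haar_prob_measure r M \<longleftrightarrow> prob_space M \<and> space M = torus r \<and>
     sets M = sets (restrict_space borel (torus r)) \<and>
     (\<forall>x\<in>torus r. \<forall>A\<in>sets M. emeasure M ((\<lambda>\<omega>. (\<lambda>i. x i * \<omega> i)) ` A) = emeasure M A)"

definition a_elem :: "real \<Rightarrow> (nat \<Rightarrow> real) \<Rightarrow> (nat \<Rightarrow> real) \<Rightarrow> nat \<Rightarrow> idx \<Rightarrow> complex" where
  "a_elem h1 h2 \<alpha> r i =
     (if i \<notin> torus_index r then 1 else
      (case i of Inl p \<Rightarrow> (of_nat p :: complex) powr (- \<i> * of_real h1)
               | Inr (j, m) \<Rightarrow> (of_real (real m + \<alpha> j) :: complex) powr (- \<i> * of_real (h2 j))))"

definition ergodic_map :: "'a measure \<Rightarrow> ('a \<Rightarrow> 'a) \<Rightarrow> bool" where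
  "ergodic_map M \<Phi> \<longleftrightarrow>
     (\<forall>A\<in>sets M. emeasure M ((A - \<Phi> ` A) \<union> (\<Phi> ` A - A)) = 0 \<longrightarrow>
        measure M A = 0 \<or> measure M A = 1)"

definition rat_lin_indep :: "'i set \<Rightarrow> ('i \<Rightarrow> real) \<Rightarrow> bool" where
  "rat_lin_indep I f \<longleftrightarrow>
     (\<forall>F c. finite F \<and> F \<subseteq> I \<and> (\<Sum>i\<in>F. of_rat (c i) * f i) = 0 \<longrightarrow> (\<forall>i\<in>F. c i = 0))"

text \<open>The family L(alpha,h): None stands for pi.\<close>
definition L_family :: "real \<Rightarrow> (nat \<Rightarrow> real) \<Rightarrow> (nat \<Rightarrow> real) \<Rightarrow> idx option \<Rightarrow> real" where
  "L_family h1 h2 \<alpha> i =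
     (case i of None \<Rightarrow> pi
      | Some (Inl p) \<Rightarrow> h1 * ln (real p)
      | Some (Inr (j, m)) \<Rightarrow> h2 j * ln (real m + \<alpha> j))"

end

theory Submission
  imports Defs "HOL-Analysis.Analysis" "HOL-Analysis.Kronecker_Approximation_Theorem"
begin


definition tmul :: "(idx \<Rightarrow> complex) \<Rightarrow> (idx \<Rightarrow> complex) \<Rightarrow> idx \<Rightarrow> complex" where
  "tmul x w = (\<lambda>i. x i * w i)"
definition tinv :: "(idx \<Rightarrow> complex) \<Rightarrow> idx \<Rightarrow> complex" where
  "tinv x = (\<lambda>i. cnj (x i))"
definition tone :: "idx \<Rightarrow> complex" where
  "tone = (\<lambda>i. 1)"

lemma torus_norm: "x \<in> torus r \<Longrightarrow> cmod (x i) = 1"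
  unfolding torus_def by (cases "i \<in> torus_index r") auto

lemma tmul_torus: "x \<in> torus r \<Longrightarrow> y \<in> torus r \<Longrightarrow> tmul x y \<in> torus r"
  unfolding torus_def tmul_def by (auto simp: norm_mult)

lemma tinv_torus: "x \<in> torus r \<Longrightarrow> tinv x \<in> torus r"
  unfolding torus_def tinv_def by auto

lemma tone_torus: "tone \<in> torus r"
  unfolding torus_def tone_def by auto

lemma cnj_mult_self: "cmod z = 1 \<Longrightarrow> cnj z * z = 1"
  by (metis complex_norm_square mult.commute of_real_1 power_one)

lemma tinv_tmul: "x \<in> torus r \<Longrightarrow> tmul (tinv x) (tmul x w) = w"
  unfolding tmul_def tinv_def using torus_norm[of x r]
  by (auto simp: cnj_mult_self mult.assoc[symmetric])

lemma tmul_tinv: "x \<in> torus r \<Longrightarrow> tmul x (tinv x) = tone"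
  unfolding tmul_def tinv_def tone_def using torus_norm[of x r] cnj_mult_self
  by (auto simp: mult.commute)

lemma tmul_tone[simp]: "tmul tone w = w" "tmul w tone = w"
  unfolding tmul_def tone_def by auto

lemma tmul_comm: "tmul x y = tmul y x"
  unfolding tmul_def by (auto simp: mult.commute)

lemma tmul_assoc: "tmul (tmul x y) z = tmul x (tmul y z)"
  unfolding tmul_def by (auto simp: mult.assoc)

lemma tmul_inj: "x \<in> torus r \<Longrightarrow> inj (tmul x)"
  by (metis injI tinv_tmul)

lemma dist_tmul: assumes "z \<in> torus r" shows "dist (tmul z w) (tmul z w') = dist w w'"
proof -
  have "dist (z i * w i) (z i * w' i) = dist (w i) (w' i)" for i
    using torus_norm[OF assms, of i]
    by (simp add: dist_norm right_diff_distrib[symmetric] norm_mult)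
  then show ?thesis unfolding dist_fun_def tmul_def by simp
qed

lemma dist_tmul_one: assumes "z \<in> torus r" "w \<in> torus r" shows "dist (tmul z w) w = dist z tone"
  using dist_tmul[OF assms(2), of z tone] by (simp add: tmul_comm)

lemma closed_torus: "closed (torus r)"
proof -
  have c: "continuous_on UNIV (\<lambda>x::idx\<Rightarrow>complex. x i)" for i
    by (rule continuous_on_product_then_coordinatewise) (rule continuous_on_id)
  have "torus r = (\<Inter>i\<in>torus_index r. {x. cmod (x i) = 1}) \<inter> (\<Inter>i\<in>- torus_index r. {x. x i = 1})"
    unfolding torus_def by auto
  moreover have "closed {x::idx\<Rightarrow>complex. cmod (x i) = 1}" for i
    using c[of i] by (intro closed_Collect_eq continuous_intros) (auto simp: continuous_on_eq_continuous_at)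
  moreover have "closed {x::idx\<Rightarrow>complex. x i = 1}" for i
    using c[of i] by (intro closed_Collect_eq continuous_intros) (auto simp: continuous_on_eq_continuous_at)
  ultimately show ?thesis by (auto intro!: closed_Inter closed_Int)
qed

lemma continuous_tmul: "continuous_on UNIV (tmul x)"
proof -
  have c: "continuous_on UNIV (\<lambda>w::idx\<Rightarrow>complex. w i)" for i
    by (rule continuous_on_product_then_coordinatewise) (rule continuous_on_id)
  show ?thesis unfolding tmul_def
    by (intro continuous_on_coordinatewise_then_product continuous_intros c)
qed


definition sd :: "'a set \<Rightarrow> 'a set \<Rightarrow> 'a set" where
  "sd S S' = (S - S') \<union> (S' - S)"

lemma haar_facts: assumes "haar_prob_measure r M"
  shows "prob_space M" "space M = torus r" "sets M = sets (restrict_space borel (torus r))"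
    "\<And>x A. x\<in>torus r \<Longrightarrow> A\<in>sets M \<Longrightarrow> emeasure M (tmul x ` A) = emeasure M A"
  using assms unfolding haar_prob_measure_def tmul_def by auto

lemma haar_sets_iff: assumes "haar_prob_measure r M"
  shows "S \<in> sets M \<longleftrightarrow> S \<subseteq> torus r \<and> S \<in> sets borel"
proof -
  have "torus r \<inter> space borel \<in> sets borel" using closed_torus by auto
  then show ?thesis using haar_facts(3)[OF assms] sets_restrict_space_iff by blast
qed

lemma tmul_image_eq: assumes "x \<in> torus r" "S \<subseteq> torus r"
  shows "tmul x ` S = tmul (tinv x) -` S \<inter> torus r"
proof (intro set_eqI iffI)
  fix w assume "w \<in> tmul x ` S"
  then obtain s where s: "s \<in> S" "w = tmul x s" by auto
  then have "tmul (tinv x) w = s" using tinv_tmul[OF assms(1)] by simp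
  then show "w \<in> tmul (tinv x) -` S \<inter> torus r" using s assms tmul_torus by auto
next
  fix w assume w: "w \<in> tmul (tinv x) -` S \<inter> torus r"
  have "tmul x (tmul (tinv x) w) = w"
    using tmul_tinv[OF assms(1)] by (simp add: tmul_assoc[symmetric])
  then show "w \<in> tmul x ` S" using w by (metis IntD1 image_eqI vimageE)
qed

lemma haar_translate_sets: assumes "haar_prob_measure r M" "x \<in> torus r" "S \<in> sets M"
  shows "tmul x ` S \<in> sets M"
proof -
  have S: "S \<subseteq> torus r" "S \<in> sets borel" using assms haar_sets_iff by blast+
  have "tmul (tinv x) -` S \<in> sets borel"
    using borel_measurable_continuous_onI[OF continuous_tmul, of "tinv x"] S(2)
    by (metis measurable_sets space_borel vimage_Int Int_UNIV_right inf_top.right_neutral)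
  then have "tmul (tinv x) -` S \<inter> torus r \<in> sets borel" using closed_torus by auto
  then show ?thesis using tmul_image_eq[OF assms(2) S(1)] haar_sets_iff[OF assms(1)] by auto
qed

lemma haar_translate_measure: assumes "haar_prob_measure r M" "x \<in> torus r" "S \<in> sets M"
  shows "measure M (tmul x ` S) = measure M S"
  using haar_facts(4)[OF assms(1) assms(2,3)] by (simp add: measure_def)

lemma sd_image: assumes "x \<in> torus r" shows "tmul x ` sd S S' = sd (tmul x ` S) (tmul x ` S')"
  unfolding sd_def using tmul_inj[OF assms] by (simp add: image_Un image_set_diff)

lemma sd_sets: assumes "haar_prob_measure r M" "S \<in> sets M" "S' \<in> sets M" shows "sd S S' \<in> sets M"
  using assms unfolding sd_def by auto

lemma sd_triangle: assumes "haar_prob_measure r M" "S1 \<in> sets M" "S2 \<in> sets M" "S3 \<in> sets M"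
  shows "measure M (sd S1 S3) \<le> measure M (sd S1 S2) + measure M (sd S2 S3)"
proof -
  interpret prob_space M using haar_facts(1)[OF assms(1)] .
  have "measure M (sd S1 S3) \<le> measure M (sd S1 S2 \<union> sd S2 S3)"
    by (rule finite_measure_mono) (use assms sd_sets in \<open>auto simp: sd_def\<close>)
  also have "\<dots> \<le> measure M (sd S1 S2) + measure M (sd S2 S3)"
    by (rule measure_subadditive) (use assms sd_sets in auto)
  finally show ?thesis .
qed

lemma sd_translate: assumes "haar_prob_measure r M" "x \<in> torus r" "S \<in> sets M" "S' \<in> sets M"
  shows "measure M (sd (tmul x ` S) (tmul x ` S')) = measure M (sd S S')"
  using haar_translate_measure[OF assms(1,2) sd_sets[OF assms(1,3,4)]] sd_image[OF assms(2)] by simp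

lemma sd_sym: "sd S S' = sd S' S" unfolding sd_def by auto

lemma tmul_image_comp: "tmul x ` (tmul y ` A) = tmul (tmul x y) ` A"
  by (auto simp: image_image tmul_assoc)

lemma H_mul: assumes "haar_prob_measure r M" "A \<in> sets M" "x \<in> torus r" "y \<in> torus r"
  and "measure M (sd (tmul x ` A) A) = 0" "measure M (sd (tmul y ` A) A) = 0"
  shows "measure M (sd (tmul (tmul x y) ` A) A) = 0"
proof -
  interpret prob_space M using haar_facts(1)[OF assms(1)] .
  have yA: "tmul y ` A \<in> sets M" "tmul x ` A \<in> sets M" using haar_translate_sets assms by auto
  have "measure M (sd (tmul x ` (tmul y ` A)) A) \<le> measure M (sd (tmul x ` (tmul y ` A)) (tmul x ` A)) + measure M (sd (tmul x ` A) A)"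
    by (rule sd_triangle) (use assms yA haar_translate_sets in auto)
  also have "\<dots> = 0" using sd_translate[OF assms(1,3) yA(1) assms(2)] assms by simp
  finally show ?thesis by (simp add: tmul_image_comp measure_nonneg order_antisym)
qed

lemma H_inv: assumes "haar_prob_measure r M" "A \<in> sets M" "x \<in> torus r"
  and "measure M (sd (tmul x ` A) A) = 0"
  shows "measure M (sd (tmul (tinv x) ` A) A) = 0"
proof -
  have iA: "tmul (tinv x) ` A \<in> sets M" using haar_translate_sets assms tinv_torus by auto
  have "tmul x ` (tmul (tinv x) ` A) = A" by (simp add: tmul_image_comp tmul_tinv[OF assms(3)])
  then have "measure M (sd (tmul (tinv x) ` A) A) = measure M (sd A (tmul x ` A))"
    using sd_translate[OF assms(1,3) iA assms(2)] by simp
  then show ?thesis using assms(4) sd_sym by metis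
qed

definition ex :: "nat \<Rightarrow> (idx \<Rightarrow> real) \<Rightarrow> idx \<Rightarrow> complex" where
  "ex r \<theta> = (\<lambda>i. if i \<in> torus_index r then cis (\<theta> i) else 1)"

lemma ex_torus: "ex r \<theta> \<in> torus r" unfolding ex_def torus_def by auto
lemma ex_mul: "tmul (ex r \<theta>) (ex r \<phi>) = ex r (\<lambda>i. \<theta> i + \<phi> i)"
  unfolding ex_def tmul_def by (auto simp: cis_mult)
lemma ex_inv: "tinv (ex r \<theta>) = ex r (\<lambda>i. - \<theta> i)"
  unfolding ex_def tinv_def by (auto simp: cis_cnj)
lemma ex_zero: "ex r (\<lambda>i. 0) = tone"
  unfolding ex_def tone_def by auto

lemma H_pow: assumes "haar_prob_measure r M" "A \<in> sets M"
  and "measure M (sd (tmul (ex r \<theta>) ` A) A) = 0"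
  shows "measure M (sd (tmul (ex r (\<lambda>i. of_int k * \<theta> i)) ` A) A) = 0"
proof -
  have nat: "measure M (sd (tmul (ex r (\<lambda>i. of_nat n * \<theta> i)) ` A) A) = 0" for n
  proof (induction n)
    case 0 then show ?case by (simp add: ex_zero sd_def)
  next
    case (Suc n)
    have "measure M (sd (tmul (tmul (ex r \<theta>) (ex r (\<lambda>i. of_nat n * \<theta> i))) ` A) A) = 0"
      by (rule H_mul[OF assms(1,2) ex_torus ex_torus assms(3) Suc])
    then show ?case by (simp add: ex_mul algebra_simps)
  qed
  show ?thesis
  proof (cases "k \<ge> 0")
    case True then show ?thesis using nat[of "nat k"] by simp
  next
    case False
    have "measure M (sd (tmul (tinv (ex r (\<lambda>i. of_nat (nat (-k)) * \<theta> i))) ` A) A) = 0"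
      by (rule H_inv[OF assms(1,2) ex_torus nat])
    then show ?thesis using False by (simp add: ex_inv)
  qed
qed

lemma powr_pos_real_imag: assumes "x > 0"
  shows "(complex_of_real x) powr (- \<i> * complex_of_real h) = cis (- (h * ln x))"
proof -
  have "(complex_of_real x) powr (- \<i> * complex_of_real h) = exp ((- \<i> * complex_of_real h) * of_real (ln x))"
    using assms by (simp add: powr_def Ln_of_real)
  also have "\<dots> = exp (\<i> * complex_of_real (- (h * ln x)))" by (simp add: algebra_simps)
  also have "\<dots> = cis (- (h * ln x))" by (simp add: cis_conv_exp)
  finally show ?thesis .
qed

lemma a_elem_ex: assumes "\<forall>j\<in>{1..r}. 0 < \<alpha> j"
  shows "a_elem h1 h2 \<alpha> r = ex r (\<lambda>i. - L_family h1 h2 \<alpha> (Some i))"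
proof
  fix i
  show "a_elem h1 h2 \<alpha> r i = ex r (\<lambda>i. - L_family h1 h2 \<alpha> (Some i)) i"
  proof (cases "i \<in> torus_index r")
    case False then show ?thesis by (simp add: a_elem_def ex_def)
  next
    case True
    show ?thesis
    proof (cases i)
      case (Inl p)
      then have "prime p" using True by (auto simp: torus_index_def)
      then have "real p > 0" by (simp add: prime_gt_0_nat)
      then show ?thesis using True Inl powr_pos_real_imag[of "real p" h1]
        by (simp add: a_elem_def ex_def L_family_def)
    next
      case (Inr jm)
      obtain j m where jm: "jm = (j, m)" by force
      then have "j \<in> {1..r}" using True Inr by (auto simp: torus_index_def)
      then have "real m + \<alpha> j > 0" using assms by (smt (verit) of_nat_0_le_iff)
      then show ?thesis using True Inr jm powr_pos_real_imag[of "real m + \<alpha> j" "h2 j"]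
        by (simp add: a_elem_def ex_def L_family_def)
    qed
  qed
qed

lemma compact_closed_sep:
  fixes K C :: "'a::metric_space set"
  assumes "compact K" "closed C" "K \<inter> C = {}"
  shows "\<exists>\<delta>>0. \<forall>x\<in>K. \<forall>y\<in>C. \<delta> \<le> dist x y"
proof (cases "K = {} \<or> C = {}")
  case True then show ?thesis by (intro exI[of _ 1]) auto
next
  case False
  have "continuous_on K (\<lambda>x. infdist x C)" by (intro continuous_intros)
  then obtain x0 where x0: "x0 \<in> K" "\<forall>y\<in>K. infdist x0 C \<le> infdist y C"
    using continuous_attains_inf[OF assms(1)] False by blast
  have pos: "infdist x0 C > 0" using infdist_pos_not_in_closed[OF assms(2)] False x0 assms(3) by blast
  show ?thesis
    by (rule exI[of _ "infdist x0 C"]) (use pos x0 infdist_le order_trans in blast)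
qed

lemma haar_reg: assumes "haar_prob_measure r M" "A \<in> sets M" "e > 0"
  shows "\<exists>K U. compact K \<and> K \<subseteq> A \<and> open U \<and> A \<subseteq> U \<and> measure M (A - K) < e \<and> measure M (U \<inter> torus r - A) < e"
proof -
  interpret prob_space M using haar_facts(1)[OF assms(1)] .
  define N where "N = distr M borel (\<lambda>x. x)"
  have idm: "(\<lambda>x. x) \<in> measurable M borel"
  proof -
    have "(\<lambda>x. x) \<in> measurable (restrict_space borel (torus r)) borel"
      by (rule measurable_restrict_space1) (rule measurable_ident_sets, simp)
    then show ?thesis using measurable_cong_sets haar_facts(3)[OF assms(1)] by blast
  qed
  have sN: "sets N = sets borel" unfolding N_def by simp
  have eN: "emeasure N B = emeasure M (B \<inter> torus r)" if "B \<in> sets borel" for B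
    unfolding N_def using emeasure_distr[OF idm that] haar_facts(2)[OF assms(1)] by simp
  have spN: "space N = UNIV" unfolding N_def by simp
  have fin: "emeasure N (space N) \<noteq> \<infinity>" using eN[of UNIV] spN by simp
  have A: "A \<subseteq> torus r" "A \<in> sets borel" using assms haar_sets_iff by blast+
  have eNA: "emeasure N A = ennreal (measure M A)"
    using eN[OF A(2)] A(1) by (simp add: Int_absorb2 emeasure_eq_measure)
  have "\<exists>K. compact K \<and> K \<subseteq> A \<and> measure M (A - K) < e"
  proof (cases "measure M A < e")
    case True then show ?thesis by (intro exI[of _ "{}"]) auto
  next
    case False
    have "ennreal (measure M A - e) < ennreal (measure M A)"
      using False assms(3) by (subst ennreal_less_iff) auto
    also have "\<dots> = (SUP K \<in> {K. K \<subseteq> A \<and> compact K}. emeasure N K)"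
      using inner_regular[OF sN fin A(2)] eNA by simp
    finally obtain K where K: "K \<subseteq> A" "compact K" "ennreal (measure M A - e) < emeasure N K"
      by (auto simp: less_SUP_iff)
    have Kb: "K \<in> sets borel" using K(2) compact_imp_closed borel_closed by blast
    have KM: "K \<in> sets M" using Kb K(1) A(1) haar_sets_iff[OF assms(1)] by auto
    have "emeasure N K = ennreal (measure M K)"
      using eN[OF Kb] K(1) A(1) by (simp add: Int_absorb2 emeasure_eq_measure)
    then have "measure M A - e < measure M K" using K(3) False assms(3)
      by (simp add: ennreal_less_iff)
    then have "measure M (A - K) < e" using finite_measure_Diff[OF assms(2) KM K(1)] by simp
    then show ?thesis using K by blast
  qed
  moreover have "\<exists>U. open U \<and> A \<subseteq> U \<and> measure M (U \<inter> torus r - A) < e"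
  proof -
    have "(INF U \<in> {U. A \<subseteq> U \<and> open U}. emeasure N U) = ennreal (measure M A)"
      using outer_regular[OF sN fin A(2)] eNA by simp
    also have "\<dots> < ennreal (measure M A + e)"
      using assms(3) by (subst ennreal_less_iff) auto
    finally obtain U where U: "A \<subseteq> U" "open U" "emeasure N U < ennreal (measure M A + e)"
      by (auto simp: INF_less_iff)
    have Ub: "U \<in> sets borel" using U(2) by auto
    have UM: "U \<inter> torus r \<in> sets M" using Ub closed_torus haar_sets_iff[OF assms(1)] by auto
    have "emeasure N U = ennreal (measure M (U \<inter> torus r))"
      using eN[OF Ub] by (simp add: emeasure_eq_measure)
    then have "measure M (U \<inter> torus r) < measure M A + e" using U(3)
      by (simp add: ennreal_less_iff)
    moreover have "measure M (U \<inter> torus r - A) = measure M (U \<inter> torus r) - measure M A"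
      by (rule finite_measure_Diff[OF UM assms(2)]) (use U(1) A(1) in auto)
    ultimately show ?thesis using U by auto
  qed
  ultimately show ?thesis by blast
qed

lemma cont_at_one: assumes "haar_prob_measure r M" "A \<in> sets M" "e > 0"
  shows "\<exists>\<delta>>0. \<forall>z\<in>torus r. dist z tone < \<delta> \<longrightarrow> measure M (sd (tmul z ` A) A) < e"
proof -
  interpret prob_space M using haar_facts(1)[OF assms(1)] .
  have A: "A \<subseteq> torus r" "A \<in> sets borel" using assms haar_sets_iff by blast+
  obtain K U where KU: "compact K" "K \<subseteq> A" "open U" "A \<subseteq> U" "measure M (A - K) < e/4"
    "measure M (U \<inter> torus r - A) < e/4"
    using haar_reg[OF assms(1,2), of "e/4"] assms(3) by auto
  obtain \<delta> where \<delta>: "\<delta> > 0" "\<forall>x\<in>K. \<forall>y\<in>-U. \<delta> \<le> dist x y"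
    using compact_closed_sep[OF KU(1), of "-U"] KU(3) KU(2,4) by auto
  have KM: "K \<in> sets M" using KU(1,2) A(1) compact_imp_closed borel_closed haar_sets_iff[OF assms(1)]
    by (metis subset_trans)
  have UM: "U \<inter> torus r \<in> sets M" using KU(3) closed_torus haar_sets_iff[OF assms(1)] by auto
  show ?thesis
  proof (intro exI[of _ \<delta>] conjI ballI impI \<delta>(1))
    fix z assume z: "z \<in> torus r" "dist z tone < \<delta>"
    have zA: "tmul z ` A \<in> sets M" using haar_translate_sets assms z by auto
    have zAK: "tmul z ` (A - K) \<in> sets M" using haar_translate_sets assms z KM by auto
    have sub: "tmul z ` A - A \<subseteq> tmul z ` (A - K) \<union> (U \<inter> torus r - A)"
    proof
      fix w assume w: "w \<in> tmul z ` A - A"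
      then obtain a where a: "a \<in> A" "w = tmul z a" by auto
      show "w \<in> tmul z ` (A - K) \<union> (U \<inter> torus r - A)"
      proof (cases "a \<in> K")
        case True
        have "dist w a = dist z tone" using dist_tmul_one[OF z(1)] a A(1) by auto
        then have "w \<in> U" using \<delta>(2) True z(2) by (metis ComplI dist_commute not_le)
        moreover have "w \<in> torus r" using a A(1) z(1) tmul_torus by auto
        ultimately show ?thesis using w by auto
      next
        case False then show ?thesis using a by auto
      qed
    qed
    have "measure M (tmul z ` A - A) \<le> measure M (tmul z ` (A - K) \<union> (U \<inter> torus r - A))"
      by (rule finite_measure_mono[OF sub]) (use zAK UM assms in auto)
    also have "\<dots> \<le> measure M (tmul z ` (A - K)) + measure M (U \<inter> torus r - A)"
      by (rule measure_subadditive) (use zAK UM assms in auto)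
    also have "\<dots> = measure M (A - K) + measure M (U \<inter> torus r - A)"
      using haar_translate_measure[OF assms(1) z(1)] KM assms(2) by auto
    finally have le: "measure M (tmul z ` A - A) < e/2" using KU(5,6) by linarith
    have eqm: "measure M (tmul z ` A) = measure M A"
      using haar_translate_measure[OF assms(1) z(1) assms(2)] .
    have "measure M (sd (tmul z ` A) A) = measure M (tmul z ` A - A) + measure M (A - tmul z ` A)"
      unfolding sd_def by (rule finite_measure_Union) (use zA assms in auto)
    also have "measure M (A - tmul z ` A) = measure M (tmul z ` A - A)"
      using finite_measure_Diff'[OF assms(2) zA] finite_measure_Diff'[OF zA assms(2)] eqm
      by (simp add: Int_commute)
    finally show "measure M (sd (tmul z ` A) A) < e" using le by linarith
  qed
qed



lemma cis_lip: "cmod (cis a - cis b) \<le> \<bar>a - b\<bar>"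
proof -
  define t where "t = a - b"
  have e: "cis a - cis b = cis b * (cis t - 1)"
    by (simp add: t_def right_diff_distrib cis_mult)
  have "(cmod (cis t - 1))\<^sup>2 = (cos t - 1)\<^sup>2 + (sin t)\<^sup>2"
    by (simp add: cmod_power2)
  also have "\<dots> = 2 - 2 * cos t" using sin_cos_squared_add[of t] by (simp add: power2_eq_square algebra_simps)
  also have "\<dots> = 4 * (sin (t/2))\<^sup>2" using cos_double_sin[of "t/2"] by simp
  also have "\<dots> \<le> 4 * (t/2)\<^sup>2"
  proof -
    have "(sin (t/2))\<^sup>2 \<le> (t/2)\<^sup>2" using abs_sin_x_le_abs_x[of "t/2"]
      by (metis abs_ge_zero power2_abs power_mono)
    then show ?thesis by simp
  qed
  also have "\<dots> = \<bar>t\<bar>\<^sup>2" by (simp add: power2_eq_square)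
  finally have "cmod (cis t - 1) \<le> \<bar>t\<bar>" by (rule power2_le_imp_le) simp
  then show ?thesis using e by (simp add: norm_mult t_def)
qed



lemma rli_two: assumes "rat_lin_indep I f" "x \<in> I" "y \<in> I" "x \<noteq> y"
  "of_rat p * f x + of_rat q * f y = 0" shows "p = 0"
proof -
  let ?c = "\<lambda>z. if z = x then p else q"
  have "(\<Sum>i\<in>{x,y}. of_rat (?c i) * f i) = 0" using assms(4,5) by simp
  moreover have "finite {x,y} \<and> {x,y} \<subseteq> I \<and> (\<Sum>i\<in>{x,y}. of_rat (?c i) * f i) = 0 \<longrightarrow> (\<forall>i\<in>{x,y}. ?c i = 0)"
    using assms(1) unfolding rat_lin_indep_def by (drule_tac x="{x,y}" in spec, drule_tac x="?c" in spec) assumption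
  ultimately have "?c x = 0" using assms(2,3) by simp
  then show ?thesis by simp
qed

lemma dense_orbit:
  fixes L :: "idx option \<Rightarrow> real"
  assumes ind: "rat_lin_indep (insert None (Some ` torus_index r)) L" and Lpi: "L None = pi"
    and y: "y \<in> torus r" and e: "e > 0"
  shows "\<exists>k::int. dist (ex r (\<lambda>i. of_int k * (- L (Some i)))) y < e"
proof -
  interpret Modules.module "(\<lambda>r. (*) (real_of_int r))"
    by (simp add: Modules.module.intro distrib_left mult.commute)
  obtain N :: nat where N: "(1/2)^N < e/2" using real_arch_pow_inv[of "e/2" "1/2"] e by auto
  define S where "S = from_nat ` {..N} \<inter> torus_index r"
  have finS: "finite S" unfolding S_def by auto
  define n where "n = card S"
  obtain g where g: "bij_betw g {0..<n} S" using ex_bij_betw_nat_finite[OF finS] n_def by blast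
  have gS: "j < n \<Longrightarrow> g j \<in> torus_index r" for j using g unfolding S_def bij_betw_def by auto
  have ginj: "i < n \<Longrightarrow> j < n \<Longrightarrow> g i = g j \<Longrightarrow> i = j" for i j
    using g unfolding bij_betw_def inj_on_def by auto
  define \<theta> where "\<theta> j = (if j < n then - L (Some (g j)) / (2*pi) else 1)" for j
  define \<beta> where "\<beta> j = Arg (y (g j)) / (2*pi)" for j
  define \<iota> where "\<iota> j = (if j < n then Some (g j) else None)" for j
  define w :: "nat \<Rightarrow> rat" where "w j = (if j < n then 1 else -2)" for j
  have \<iota>I: "\<iota> j \<in> insert None (Some ` torus_index r)" for j using gS by (auto simp: \<iota>_def)
  have \<iota>inj: "inj_on \<iota> {..n}" using ginj by (auto simp: inj_on_def \<iota>_def split: if_splits)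
  have \<theta>L: "- 2 * pi * \<theta> j = of_rat (w j) * L (\<iota> j)" for j
    by (simp add: \<theta>_def w_def \<iota>_def Lpi)
  have wnz: "w j \<noteq> 0" for j by (simp add: w_def)
  have inj: "inj_on \<theta> {..n}"
  proof (rule inj_onI)
    fix i j assume ij: "i \<in> {..n}" "j \<in> {..n}" "\<theta> i = \<theta> j"
    show "i = j"
    proof (rule ccontr)
      assume ne: "i \<noteq> j"
      then have "\<iota> i \<noteq> \<iota> j" using \<iota>inj ij by (auto dest: inj_onD)
      moreover have "of_rat (w i) * L (\<iota> i) + of_rat (- w j) * L (\<iota> j) = 0"
        using \<theta>L[of i] \<theta>L[of j] ij(3) by (simp add: of_rat_minus)
      ultimately show False using rli_two[OF ind \<iota>I \<iota>I] wnz by blast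
    qed
  qed
  have indp: "independent (\<theta> ` {..n})"
  proof
    assume "dependent (\<theta> ` {..n})"
    then obtain t u where tu: "finite t" "t \<subseteq> \<theta> ` {..n}" "(\<Sum>v\<in>t. of_int (u v) * v) = 0" "\<exists>v\<in>t. u v \<noteq> 0"
      unfolding dependent_explicit by blast
    define J where "J = {j \<in> {..n}. \<theta> j \<in> t}"
    have tJ: "t = \<theta> ` J" using tu(2) unfolding J_def by auto
    have injJ: "inj_on \<theta> J" using inj by (rule inj_on_subset) (auto simp: J_def)
    have injJ': "inj_on \<iota> J" using \<iota>inj by (rule inj_on_subset) (auto simp: J_def)
    define c where "c z = of_int (u (\<theta> (inv_into {..n} \<iota> z))) * w (inv_into {..n} \<iota> z)" for z
    have cj: "j \<in> J \<Longrightarrow> c (\<iota> j) = of_int (u (\<theta> j)) * w j" for j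
      unfolding c_def using inv_into_f_f[OF \<iota>inj] by (auto simp: J_def)
    have "(\<Sum>z\<in>\<iota> ` J. of_rat (c z) * L z) = (\<Sum>j\<in>J. of_rat (c (\<iota> j)) * L (\<iota> j))"
      by (rule sum.reindex[OF injJ', unfolded comp_def])
    also have "\<dots> = (\<Sum>j\<in>J. of_int (u (\<theta> j)) * (- 2 * pi * \<theta> j))"
      by (rule sum.cong[OF refl]) (simp add: cj of_rat_mult mult.assoc flip: \<theta>L)
    also have "\<dots> = - 2 * pi * (\<Sum>j\<in>J. of_int (u (\<theta> j)) * \<theta> j)"
      by (simp add: sum_distrib_left algebra_simps)
    also have "(\<Sum>j\<in>J. of_int (u (\<theta> j)) * \<theta> j) = (\<Sum>v\<in>t. of_int (u v) * v)"
      unfolding tJ by (rule sum.reindex[OF injJ, unfolded comp_def, symmetric])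
    finally have "(\<Sum>z\<in>\<iota> ` J. of_rat (c z) * L z) = 0" using tu(3) by simp
    moreover have "finite (\<iota> ` J)" "\<iota> ` J \<subseteq> insert None (Some ` torus_index r)"
      using \<iota>I by (auto simp: J_def)
    ultimately have c0: "\<forall>z\<in>\<iota> ` J. c z = 0" using ind unfolding rat_lin_indep_def by blast
    obtain v where v: "v \<in> t" "u v \<noteq> 0" using tu(4) by blast
    then obtain j where j: "j \<in> J" "v = \<theta> j" using tJ by auto
    then have "c (\<iota> j) = 0" using c0 by auto
    then show False using cj[OF j(1)] v j wnz by simp
  qed
  define \<eta> where "\<eta> = e / (8*pi)"
  have \<eta>: "\<eta> > 0" using e by (simp add: \<eta>_def)
  have \<theta>n: "\<theta> n = 1" by (simp add: \<theta>_def)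
  obtain k m where km: "\<And>j. j < n \<Longrightarrow> \<bar>of_int k * \<theta> j - of_int (m j) - \<beta> j\<bar> < \<eta>"
    using Kronecker_thm_2[of \<theta> n \<eta> \<beta>] indp inj \<theta>n \<eta> by blast
  define x where "x = ex r (\<lambda>i. of_int k * (- L (Some i)))"
  have close: "dist (x (g j)) (y (g j)) \<le> e/4" if j: "j < n" for j
  proof -
    have "x (g j) = cis (2*pi*(of_int k * \<theta> j))"
      using gS[OF j] j by (simp add: x_def ex_def \<theta>_def)
    also have "\<dots> = cis (2*pi*(of_int k * \<theta> j - of_int (m j)))"
    proof -
      have "cis (2*pi*(of_int k * \<theta> j)) = cis (2*pi*(of_int k * \<theta> j - of_int (m j))) * cis (2*pi * of_int (m j))"
        by (simp add: cis_mult algebra_simps)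
      also have "cis (2*pi * of_int (m j)) = 1" by (rule cis_multiple_2pi) simp
      finally show ?thesis by simp
    qed
    finally have xe: "x (g j) = cis (2*pi*(of_int k * \<theta> j - of_int (m j)))" .
    have yn: "cmod (y (g j)) = 1" using torus_norm[OF y] .
    then have "y (g j) \<noteq> 0" by auto
    then have "cis (Arg (y (g j))) = y (g j)" using yn by (simp add: cis_Arg sgn_eq)
    then have ye: "y (g j) = cis (2*pi*\<beta> j)" by (simp add: \<beta>_def)
    have "dist (x (g j)) (y (g j)) \<le> \<bar>2*pi*(of_int k * \<theta> j - of_int (m j)) - 2*pi*\<beta> j\<bar>"
      unfolding xe ye dist_norm by (rule cis_lip)
    also have "\<dots> = 2*pi*\<bar>of_int k * \<theta> j - of_int (m j) - \<beta> j\<bar>"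
      by (simp add: right_diff_distrib[symmetric] abs_mult)
    also have "\<dots> \<le> 2*pi*\<eta>" using km[OF j] by (intro mult_left_mono) auto
    also have "\<dots> = e/4" by (simp add: \<eta>_def)
    finally show ?thesis .
  qed
  have all: "dist (x (from_nat i)) (y (from_nat i)) \<le> e/4" if "i \<le> N" for i
  proof (cases "from_nat i \<in> torus_index r")
    case True
    then have "from_nat i \<in> S" using that by (auto simp: S_def)
    then obtain j where "j < n" "g j = from_nat i" using g unfolding bij_betw_def by auto
    then show ?thesis using close by metis
  next
    case False
    then have "x (from_nat i) = 1" "y (from_nat i) = 1" using y by (auto simp: x_def ex_def torus_def)
    then show ?thesis using e by simp
  qed
  have "Max {dist (x (from_nat i)) (y (from_nat i)) |i. i \<le> N} \<le> e/4"
  proof (rule Max.boundedI)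
    have "{dist (x (from_nat i)) (y (from_nat i)) |i. i \<le> N} = (\<lambda>i. dist (x (from_nat i)) (y (from_nat i))) ` {..N}"
      by auto
    then show "finite {dist (x (from_nat i)) (y (from_nat i)) |i. i \<le> N}" by simp
  qed (use all in auto)
  then have "dist x y < e"
    using dist_fun_le_dist_first_terms[of x y N] N by linarith
  then show ?thesis unfolding x_def by blast
qed




lemma tinv_image_iff: assumes "x \<in> torus r"
  shows "w \<in> tmul (tinv x) ` S \<longleftrightarrow> tmul x w \<in> S"
proof
  assume "w \<in> tmul (tinv x) ` S"
  then obtain s where "s \<in> S" "w = tmul (tinv x) s" by auto
  then show "tmul x w \<in> S" using tmul_tinv[OF assms] by (simp add: tmul_assoc[symmetric])
next
  assume "tmul x w \<in> S"
  then show "w \<in> tmul (tinv x) ` S" using tinv_tmul[OF assms, of w] by (metis image_eqI)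
qed

lemma coord_meas: assumes "haar_prob_measure r M" shows "(\<lambda>x. x i) \<in> borel_measurable M"
proof -
  have "(\<lambda>x::idx\<Rightarrow>complex. x i) \<in> borel_measurable borel"
    by (rule borel_measurable_continuous_onI, rule continuous_on_product_then_coordinatewise, rule continuous_on_id)
  then have "(\<lambda>x::idx\<Rightarrow>complex. x i) \<in> borel_measurable (restrict_space borel (torus r))"
    by (rule measurable_restrict_space1)
  then show ?thesis using measurable_cong_sets haar_facts(3)[OF assms] by blast
qed

lemma tmul_meas: assumes "haar_prob_measure r M"
  shows "(\<lambda>p. tmul (fst p) (snd p)) \<in> measurable (M \<Otimes>\<^sub>M M) M"
proof -
  have c: "(\<lambda>x. x i) \<in> borel_measurable M" for i using coord_meas[OF assms] .
  have "(\<lambda>p. tmul (fst p) (snd p)) \<in> borel_measurable (M \<Otimes>\<^sub>M M)"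
  proof (rule measurable_coordinatewise_then_product)
    fix i
    have 1: "(\<lambda>p. fst p i) \<in> borel_measurable (M \<Otimes>\<^sub>M M)"
      by (rule measurable_compose[OF measurable_fst c])
    have 2: "(\<lambda>p. snd p i) \<in> borel_measurable (M \<Otimes>\<^sub>M M)"
      by (rule measurable_compose[OF measurable_snd c])
    show "(\<lambda>p. tmul (fst p) (snd p) i) \<in> borel_measurable (M \<Otimes>\<^sub>M M)"
      unfolding tmul_def using borel_measurable_times[OF 1 2] by simp
  qed
  moreover have "(\<lambda>p. tmul (fst p) (snd p)) \<in> space (M \<Otimes>\<^sub>M M) \<rightarrow> torus r"
    using haar_facts(2)[OF assms] tmul_torus by (auto simp: space_pair_measure)
  ultimately have "(\<lambda>p. tmul (fst p) (snd p)) \<in> measurable (M \<Otimes>\<^sub>M M) (restrict_space borel (torus r))"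
    by (simp add: measurable_restrict_space2_iff)
  then show ?thesis using measurable_cong_sets haar_facts(3)[OF assms] by blast
qed

lemma full_inv_trivial: assumes "haar_prob_measure r M" "A \<in> sets M"
  and inv: "\<forall>y\<in>torus r. measure M (sd (tmul y ` A) A) = 0"
  shows "measure M A = 0 \<or> measure M A = 1"
proof -
  interpret prob_space M using haar_facts(1)[OF assms(1)] .
  interpret P: pair_sigma_finite M M by unfold_locales
  have sp: "space M = torus r" using haar_facts(2)[OF assms(1)] .
  have A: "A \<subseteq> torus r" using sets.sets_into_space[OF assms(2)] sp by simp
  define B where "B = torus r - A"
  have BM: "B \<in> sets M" unfolding B_def using assms(2) sp by (metis sets.compl_sets)
  define f :: "(idx\<Rightarrow>complex) \<times> (idx\<Rightarrow>complex) \<Rightarrow> ennreal" where "f p = indicator A (snd p) * indicator B (tmul (fst p) (snd p))" for p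
  have fm: "(\<lambda>p. (f p :: ennreal)) \<in> borel_measurable (M \<Otimes>\<^sub>M M)"
  proof -
    have "(\<lambda>p. indicator A (snd p) :: ennreal) \<in> borel_measurable (M \<Otimes>\<^sub>M M)"
      by (rule measurable_compose[OF measurable_snd borel_measurable_indicator[OF assms(2)]])
    moreover have "(\<lambda>p. indicator B (tmul (fst p) (snd p)) :: ennreal) \<in> borel_measurable (M \<Otimes>\<^sub>M M)"
      using measurable_compose[OF tmul_meas[OF assms(1)] borel_measurable_indicator[OF BM]] by simp
    ultimately show ?thesis unfolding f_def by (rule borel_measurable_times_ennreal)
  qed
  have "(\<integral>\<^sup>+ w. (\<integral>\<^sup>+ x. f (x, w) \<partial>M) \<partial>M) = (\<integral>\<^sup>+ x. (\<integral>\<^sup>+ w. f (x, w) \<partial>M) \<partial>M)"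
    by (rule P.Fubini[OF fm])
  also have "\<dots> = (\<integral>\<^sup>+ x. 0 \<partial>M)"
  proof (rule nn_integral_cong)
    fix x assume x: "x \<in> space M"
    then have xT: "x \<in> torus r" using sp by simp
    have iA: "tmul (tinv x) ` A \<in> sets M" using haar_translate_sets[OF assms(1) tinv_torus[OF xT] assms(2)] .
    have "(\<integral>\<^sup>+ w. f (x, w) \<partial>M) = (\<integral>\<^sup>+ w. indicator (A - tmul (tinv x) ` A) w \<partial>M)"
    proof (rule nn_integral_cong)
      fix w assume "w \<in> space M"
      then have "tmul x w \<in> torus r" using tmul_torus xT sp by auto
      then show "f (x, w) = indicator (A - tmul (tinv x) ` A) w"
        unfolding f_def B_def using tinv_image_iff[OF xT, of w A] by (auto simp: indicator_def)
    qed
    also have "\<dots> = emeasure M (A - tmul (tinv x) ` A)" using assms(2) iA by simp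
    also have "\<dots> = 0"
    proof -
      have "emeasure M (A - tmul (tinv x) ` A) \<le> emeasure M (sd (tmul (tinv x) ` A) A)"
        by (rule emeasure_mono) (use iA assms(2) in \<open>auto simp: sd_def\<close>)
      also have "\<dots> = ennreal (measure M (sd (tmul (tinv x) ` A) A))" by (simp add: emeasure_eq_measure)
      also have "\<dots> = 0" using inv tinv_torus[OF xT] by simp
      finally show ?thesis by simp
    qed
    finally show "(\<integral>\<^sup>+ w. f (x, w) \<partial>M) = 0" .
  qed
  also have "\<dots> = 0" by simp
  finally have z: "(\<integral>\<^sup>+ w. (\<integral>\<^sup>+ x. f (x, w) \<partial>M) \<partial>M) = 0" .
  have "(\<integral>\<^sup>+ w. (\<integral>\<^sup>+ x. f (x, w) \<partial>M) \<partial>M) = (\<integral>\<^sup>+ w. emeasure M B * indicator A w \<partial>M)"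
  proof (rule nn_integral_cong)
    fix w assume w: "w \<in> space M"
    then have wT: "w \<in> torus r" using sp by simp
    have iB: "tmul (tinv w) ` B \<in> sets M" using haar_translate_sets[OF assms(1) tinv_torus[OF wT] BM] .
    have "(\<integral>\<^sup>+ x. f (x, w) \<partial>M) = (\<integral>\<^sup>+ x. indicator A w * indicator (tmul (tinv w) ` B) x \<partial>M)"
    proof (rule nn_integral_cong)
      fix x assume "x \<in> space M"
      then show "f (x, w) = indicator A w * indicator (tmul (tinv w) ` B) x"
        unfolding f_def using tinv_image_iff[OF wT, of x B] by (simp add: tmul_comm indicator_def)
    qed
    also have "\<dots> = indicator A w * emeasure M (tmul (tinv w) ` B)"
      by (rule nn_integral_cmult_indicator[OF iB])
    also have "\<dots> = emeasure M B * indicator A w"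
      using haar_facts(4)[OF assms(1) tinv_torus[OF wT] BM] by (simp add: mult.commute)
    finally show "(\<integral>\<^sup>+ x. f (x, w) \<partial>M) = emeasure M B * indicator A w" .
  qed
  also have "\<dots> = emeasure M B * emeasure M A" by (rule nn_integral_cmult_indicator[OF assms(2)])
  finally have "emeasure M B * emeasure M A = 0" using z by simp
  then have "measure M B = 0 \<or> measure M A = 0" by (simp add: emeasure_eq_measure)
  moreover have "measure M B = 1 - measure M A"
    unfolding B_def using prob_compl[OF assms(2)] sp by simp
  ultimately show ?thesis by auto
qed




lemma all_invariant: assumes M: "haar_prob_measure r M" and AM: "A \<in> sets M"
  and ind: "rat_lin_indep (insert None (Some ` torus_index r)) L" and Lpi: "L None = pi"
  and a0: "measure M (sd (tmul (ex r (\<lambda>i. - L (Some i))) ` A) A) = 0"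
  and y: "y \<in> torus r"
  shows "measure M (sd (tmul y ` A) A) = 0"
proof -
  interpret prob_space M using haar_facts(1)[OF M] .
  have "measure M (sd (tmul y ` A) A) < e" if e: "e > 0" for e
  proof -
    obtain \<delta> where \<delta>: "\<delta> > 0" "\<forall>z\<in>torus r. dist z tone < \<delta> \<longrightarrow> measure M (sd (tmul z ` A) A) < e"
      using cont_at_one[OF M AM e] by blast
    obtain k :: int where k: "dist (ex r (\<lambda>i. of_int k * (- L (Some i)))) y < \<delta>"
      using dense_orbit[OF ind Lpi y \<delta>(1)] by blast
    define x where "x = ex r (\<lambda>i. of_int k * (- L (Some i)))"
    have xT: "x \<in> torus r" unfolding x_def by (rule ex_torus)
    have x0: "measure M (sd (tmul x ` A) A) = 0" unfolding x_def by (rule H_pow[OF M AM a0])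
    define z where "z = tmul (tinv x) y"
    have zT: "z \<in> torus r" unfolding z_def using tmul_torus tinv_torus xT y by auto
    have xz: "tmul x z = y" unfolding z_def using tmul_tinv[OF xT] by (simp add: tmul_assoc[symmetric])
    have "dist z tone = dist y x"
      unfolding z_def using dist_tmul[OF tinv_torus[OF xT], of y x] tmul_tinv[OF xT] by (simp add: tmul_comm)
    then have zd: "dist z tone < \<delta>" using k by (simp add: x_def dist_commute)
    have zA: "tmul z ` A \<in> sets M" "tmul x ` A \<in> sets M" "tmul y ` A \<in> sets M"
      using haar_translate_sets M AM zT xT y by auto
    have "tmul y ` A = tmul x ` (tmul z ` A)" by (simp add: tmul_image_comp xz)
    then have "measure M (sd (tmul y ` A) A) \<le> measure M (sd (tmul x ` (tmul z ` A)) (tmul x ` A)) + measure M (sd (tmul x ` A) A)"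
      using sd_triangle[OF M zA(3) zA(2) AM] by simp
    also have "\<dots> = measure M (sd (tmul z ` A) A)" using sd_translate[OF M xT zA(1) AM] x0 by simp
    also have "\<dots> < e" using \<delta>(2) zT zd by blast
    finally show ?thesis .
  qed
  then show ?thesis by (metis measure_nonneg not_le order_antisym zero_less_measure_iff less_irrefl)
qed

theorem lemma2:
  fixes r :: nat and \<alpha> h2 :: "nat \<Rightarrow> real" and h1 :: real
    and M :: "(idx \<Rightarrow> complex) measure"
  assumes "r \<ge> 1"
    and "\<forall>j\<in>{1..r}. 0 < \<alpha> j \<and> \<alpha> j < 1"
    and "h1 > 0" and "\<forall>j\<in>{1..r}. h2 j > 0"
    and "rat_lin_indep (insert None (Some ` torus_index r)) (L_family h1 h2 \<alpha>)"
    and "haar_prob_measure r M"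
  shows "ergodic_map M (\<lambda>\<omega>. (\<lambda>i. a_elem h1 h2 \<alpha> r i * \<omega> i))"
proof -
  interpret prob_space M using haar_facts(1)[OF assms(6)] .
  have aex: "a_elem h1 h2 \<alpha> r = ex r (\<lambda>i. - L_family h1 h2 \<alpha> (Some i))"
    by (rule a_elem_ex) (use assms(2) in auto)
  have Phi: "(\<lambda>\<omega>. (\<lambda>i. a_elem h1 h2 \<alpha> r i * \<omega> i)) = tmul (ex r (\<lambda>i. - L_family h1 h2 \<alpha> (Some i)))"
    unfolding tmul_def aex by simp
  have Lpi: "L_family h1 h2 \<alpha> None = pi" by (simp add: L_family_def)
  show ?thesis unfolding ergodic_map_def Phi
  proof (intro ballI impI)
    fix A assume AM: "A \<in> sets M"
    let ?a = "ex r (\<lambda>i. - L_family h1 h2 \<alpha> (Some i))"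
    assume "emeasure M ((A - tmul ?a ` A) \<union> (tmul ?a ` A - A)) = 0"
    then have "emeasure M (sd (tmul ?a ` A) A) = 0" by (simp add: sd_def Un_commute)
    then have a0: "measure M (sd (tmul ?a ` A) A) = 0" by (simp add: measure_def)
    have "\<forall>y\<in>torus r. measure M (sd (tmul y ` A) A) = 0"
      using all_invariant[OF assms(6) AM assms(5) Lpi a0] by blast
    then show "measure M A = 0 \<or> measure M A = 1" by (rule full_inv_trivial[OF assms(6) AM])
  qed
qed


end
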